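(* Let $d\ge 2$. There are a constant $C>0$ and $n_0(d)$ depending only on $d$ such that for all $n\ge n_0(d)$: if $\mathcal{F}$, $B_i$ are as in the context, $J\subseteq[n]$ with $|J|\le n/4$, and $K\ge 0$ is a real number with $|E(\mathcal{G}_J)|\ge\binom{n-|J|}{d}-Kn$, then $$|\mathcal{T}_J^4\cup\mathcal{T}_J^5|\le(|J|-1)\binom{n-|J|}{d-1}+CK.$$
   Context: Let $\mathcal{F}=\{F_1,\dots,F_m\}\subseteq\binom{[n]}{d+1}$ consist of distinct sets and have VC-dimension at most $d$ (no $(d+1)$-set $S$ is shattered, i.e. no $S$ such that every $A\subseteq S$ equals $F\cap S$ for some $F\in\mathcal{F}$). For $i\in[m]$, call $B\subsetneq F_i$ admissible for $F_i$ if $F\cap F_i\neq B$ for every $F\in\mathcal{F}$. For each $i$, $B_i$ is a fixed admissible set for $F_i$ of maximum cardinality among all admissible sets. For $J\subseteq[n]$, $\mathcal{G}_J$ is the $d$-uniform hypergraph on vertex set $[n]\setminus J$ with edge set $E(\mathcal{G}_J):=\{F_k\setminus J: k\in[m],\ |F_k\cap J|=1\}$. $\mathcal{T}_J^4$ is the set of $F_k\in\mathcal{F}$ with $|F_k\cap J|=1$, $|B_k|=d$ and $|B_k\cap J|=1$; $\mathcal{T}_J^5$ is the set of $F_k\in\mathcal{F}$ with $|F_k\cap J|=2$ and $F_k\setminus J\subseteq B_k$. *)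

theory Defs
  imports Complex_Main
begin

text \<open>The family F is represented as a set of distinct (d+1)-subsets of [n] = {1..n};
  the choice of the sets B_i is represented as a function B on the members of F.\<close>

definition shatters :: "nat set set \<Rightarrow> nat set \<Rightarrow> bool" where
  "shatters F S \<longleftrightarrow> (\<forall>A. A \<subseteq> S \<longrightarrow> (\<exists>X\<in>F. X \<inter> S = A))"

definition vc_dim_le :: "nat set set \<Rightarrow> nat \<Rightarrow> bool" where
  "vc_dim_le F d \<longleftrightarrow> (\<forall>S. card S = d + 1 \<longrightarrow> \<not> shatters F S)"

definition admissible :: "nat set set \<Rightarrow> nat set \<Rightarrow> nat set \<Rightarrow> bool" where
  "admissible F Fi B \<longleftrightarrow> B \<subset> Fi \<and> (\<forall>X\<in>F. X \<inter> Fi \<noteq> B)"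

definition max_admissible_choice :: "nat set set \<Rightarrow> (nat set \<Rightarrow> nat set) \<Rightarrow> bool" where
  "max_admissible_choice F B \<longleftrightarrow>
     (\<forall>Fi\<in>F. admissible F Fi (B Fi) \<and>
        (\<forall>B'. admissible F Fi B' \<longrightarrow> card B' \<le> card (B Fi)))"

definition edges_G :: "nat set set \<Rightarrow> nat set \<Rightarrow> nat set set" where
  "edges_G F J = {X - J | X. X \<in> F \<and> card (X \<inter> J) = 1}"

definition T4 :: "nat set set \<Rightarrow> (nat set \<Rightarrow> nat set) \<Rightarrow> nat \<Rightarrow> nat set \<Rightarrow> nat set set" where
  "T4 F B d J = {X \<in> F. card (X \<inter> J) = 1 \<and> card (B X) = d \<and> card (B X \<inter> J) = 1}"

definition T5 :: "nat set set \<Rightarrow> (nat set \<Rightarrow> nat set) \<Rightarrow> nat set \<Rightarrow> nat set set" where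
  "T5 F B J = {X \<in> F. card (X \<inter> J) = 2 \<and> X - J \<subseteq> B X}"

end

theory Submission
  imports Defs
begin

lemma star_bound:
  assumes fin: "finite U" and sub: "Q \<subseteq> {e. e \<subseteq> U \<and> card e = 2}" and xU: "x \<in> U"
    and allx: "\<forall>e\<in>Q. x \<in> e"
  shows "card Q \<le> card U - 1"
proof -
  have "inj_on (\<lambda>e. e - {x}) Q"
  proof (rule inj_onI)
    fix e f assume "e \<in> Q" "f \<in> Q" "e - {x} = f - {x}"
    then show "e = f" using allx by (metis insert_Diff)
  qed
  moreover have "(\<lambda>e. e - {x}) ` Q \<subseteq> (\<lambda>y. {y}) ` (U - {x})"
  proof
    fix g assume "g \<in> (\<lambda>e. e - {x}) ` Q"
    then obtain e where e: "e \<in> Q" "g = e - {x}" by auto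
    have "card e = 2" "x \<in> e" "finite e" using e sub allx by (auto intro: card_ge_0_finite simp: subset_iff)
    then have "card g = 1" using e(2) by simp
    then obtain y where "g = {y}" using card_1_singletonE by blast
    then show "g \<in> (\<lambda>y. {y}) ` (U - {x})" using e sub by auto
  qed
  ultimately have "card Q \<le> card ((\<lambda>y. {y}) ` (U - {x}))"
    using fin by (metis card_image card_mono finite_Diff finite_imageI)
  also have "\<dots> \<le> card (U - {x})" by (rule card_image_le) (use fin in auto)
  also have "\<dots> = card U - 1" using xU fin by simp
  finally show ?thesis .
qed

lemma pairs_bound:
  assumes fin: "finite U" and sub: "Q \<subseteq> {e. e \<subseteq> U \<and> card e = 2}"
    and inter: "\<forall>e\<in>Q. \<forall>f\<in>Q. e \<inter> f \<noteq> {}"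
  shows "card Q \<le> card U"
proof (cases "Q = {}")
  case True then show ?thesis by simp
next
  case False
  then obtain e0 where e0: "e0 \<in> Q" by auto
  have "card e0 = 2" using e0 sub by auto
  then obtain a b where ab: "e0 = {a,b}" "a \<noteq> b" unfolding card_2_iff by blast
  have aU: "a \<in> U" "b \<in> U" using e0 ab sub by auto
  have "Q \<subseteq> Pow U" using sub by auto
  then have finQ: "finite Q" using fin by (simp add: finite_subset)
  show ?thesis
  proof (cases "\<exists>e1\<in>Q. a \<in> e1 \<and> b \<notin> e1")
    case True
    then obtain e1 where e1: "e1 \<in> Q" "a \<in> e1" "b \<notin> e1" by auto
    have "card e1 = 2" using e1 sub by auto
    then obtain p q where pq: "e1 = {p,q}" "p \<noteq> q" unfolding card_2_iff by blast
    obtain x where x: "e1 = {a,x}" "x \<noteq> a"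
      using pq e1(2) by (metis insert_commute insertE singletonD)
    have xb: "x \<noteq> b" using x e1 by auto
    have "Q \<subseteq> {e\<in>Q. a \<in> e} \<union> {{b,x}}"
    proof
      fix f assume f: "f \<in> Q"
      show "f \<in> {e\<in>Q. a \<in> e} \<union> {{b,x}}"
      proof (cases "a \<in> f")
        case True then show ?thesis using f by auto
      next
        case False
        have "b \<in> f" using inter f e0 ab False by auto
        moreover have "x \<in> f" using inter f e1 x False by auto
        moreover have "card f = 2" using f sub by auto
        moreover have "{b,x} \<subseteq> f" using calculation by auto
        ultimately have "f = {b,x}" using xb
          by (metis card_2_iff card_subset_eq finite.emptyI finite_insert)
        then show ?thesis by auto
      qed
    qed
    then have "card Q \<le> card ({e\<in>Q. a \<in> e} \<union> {{b,x}})"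
      by (intro card_mono) (use finQ in auto)
    also have "\<dots> \<le> card {e\<in>Q. a \<in> e} + card {{b,x}}" by (rule card_Un_le)
    finally have "card Q \<le> card {e\<in>Q. a \<in> e} + 1" by simp
    also have "card {e\<in>Q. a \<in> e} \<le> card U - 1"
      by (rule star_bound[OF fin _ aU(1)]) (use sub in auto)
    moreover have "card U \<ge> 1" using aU fin by (metis One_nat_def Suc_leI card_gt_0_iff empty_iff)
    ultimately show ?thesis by linarith
  next
    case False
    have "\<forall>e\<in>Q. b \<in> e"
    proof
      fix e assume e: "e \<in> Q"
      show "b \<in> e"
      proof (rule ccontr)
        assume nb: "b \<notin> e"
        then have "a \<in> e" using inter e e0 ab by auto
        then show False using False e nb by auto
      qed
    qed
    then have "card Q \<le> card U - 1" by (rule star_bound[OF fin sub aU(2)])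
    then show ?thesis by simp
  qed
qed


locale cfg =
  fixes n d :: nat and F :: "nat set set" and B :: "nat set \<Rightarrow> nat set" and J :: "nat set"
  assumes Fsub: "\<forall>X\<in>F. X \<subseteq> {1..n} \<and> card X = d + 1"
    and adm: "\<forall>X\<in>F. admissible F X (B X)"
    and Jsub: "J \<subseteq> {1..n}"
    and d1: "d \<ge> 1"
begin

definition "V = {1..n} - J"
definition "T = T4 F B d J \<union> T5 F B J"
definition "A S = {X \<in> T. B X - J = S}"
definition "P S = {X \<in> A S. B X \<inter> J \<noteq> {}}"
definition "Q S = {X \<in> A S. B X \<inter> J = {}}"
definition "E S = {z \<in> V - S. insert z S \<in> edges_G F J}"
definition "lab X = the_elem (B X \<inter> J)"

lemma finJ: "finite J" using Jsub finite_subset by blast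

lemma F_fin: "X \<in> F \<Longrightarrow> finite X" using Fsub finite_subset by (meson finite_atLeastAtMost)

lemma F_card: "X \<in> F \<Longrightarrow> card X = d + 1" using Fsub by blast

lemma B_psub: "X \<in> F \<Longrightarrow> B X \<subset> X" using adm unfolding admissible_def by blast

lemma B_notrace: "X \<in> F \<Longrightarrow> Y \<in> F \<Longrightarrow> Y \<inter> X \<noteq> B X" using adm unfolding admissible_def by blast

lemma L2:
  assumes X: "X \<in> F" and Y: "Y \<in> F" and c: "card (B X) = d" and s: "B X \<subseteq> Y"
  shows "X = Y"
proof -
  have fX: "finite X" "finite Y" using X Y F_fin by auto
  have "B X \<subseteq> Y \<inter> X" using s B_psub[OF X] by auto
  moreover have "Y \<inter> X \<noteq> B X" using B_notrace[OF X Y] .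
  ultimately have "B X \<subset> Y \<inter> X" by auto
  then have "card (B X) < card (Y \<inter> X)" using fX by (meson finite_Int psubset_card_mono)
  then have "card (Y \<inter> X) \<ge> card X" using c F_card[OF X] by simp
  then have "Y \<inter> X = X" using fX by (metis card_seteq inf_le2)
  then have "X \<subseteq> Y" by auto
  then show ?thesis using fX F_card[OF X] F_card[OF Y] by (metis card_subset_eq)
qed

lemma T_props:
  assumes "X \<in> T"
  shows "X \<in> F" "B X - J \<subseteq> V" "card (B X - J) = d - 1" "finite (B X)" "B X \<subseteq> X"
proof -
  show XF: "X \<in> F" using assms unfolding T_def T4_def T5_def by auto
  have fX: "finite X" using F_fin[OF XF] .
  show BX: "B X \<subseteq> X" using B_psub[OF XF] by auto
  show fB: "finite (B X)" using BX fX finite_subset by blast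
  show "B X - J \<subseteq> V" using BX XF Fsub unfolding V_def by blast
  show "card (B X - J) = d - 1"
  proof (cases "X \<in> T4 F B d J")
    case True
    then have "card (B X) = d" "card (B X \<inter> J) = 1" unfolding T4_def by auto
    then show ?thesis using fB by (simp add: card_Diff_subset_Int)
  next
    case False
    then have X5: "X \<in> T5 F B J" using assms unfolding T_def by auto
    then have "card (X \<inter> J) = 2" "X - J \<subseteq> B X" unfolding T5_def by auto
    then have "B X - J = X - J" using BX by auto
    then show ?thesis using \<open>card (X \<inter> J) = 2\<close> fX F_card[OF XF] by (simp add: card_Diff_subset_Int)
  qed
qed

lemma P_label:
  assumes X: "X \<in> T" and ne: "B X \<inter> J \<noteq> {}"
  shows "B X \<inter> J = {lab X}" "card (B X) = d" "lab X \<in> J" "B X = insert (lab X) (B X - J)"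
proof -
  have XF: "X \<in> F" using T_props[OF X] by auto
  have fX: "finite X" using F_fin[OF XF] .
  have fB: "finite (B X)" using T_props[OF X] by auto
  have c1: "card (B X \<inter> J) = 1"
  proof (cases "X \<in> T4 F B d J")
    case True then show ?thesis unfolding T4_def by auto
  next
    case False
    then have X5: "X \<in> T5 F B J" using X unfolding T_def by auto
    then have c2: "card (X \<inter> J) = 2" and sub: "X - J \<subseteq> B X" unfolding T5_def by auto
    have BX: "B X \<subset> X" using B_psub[OF XF] .
    have "B X \<inter> J \<noteq> X \<inter> J"
    proof
      assume "B X \<inter> J = X \<inter> J"
      then have "X \<subseteq> B X" using sub by auto
      then show False using BX by auto
    qed
    then have "B X \<inter> J \<subset> X \<inter> J" using BX by auto
    then have "card (B X \<inter> J) < 2" using c2 fX by (metis finite_Int psubset_card_mono)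
    moreover have "card (B X \<inter> J) \<noteq> 0" using ne fB by simp
    ultimately show ?thesis by linarith
  qed
  then obtain x where x: "B X \<inter> J = {x}" using card_1_singletonE by blast
  then show l: "B X \<inter> J = {lab X}" unfolding lab_def by simp
  then show "lab X \<in> J" by auto
  show "card (B X) = d" using c1 T_props(3)[OF X] fB d1 by (metis card_Diff_subset_Int finite_Int diff_add_inverse2 le_add_diff_inverse2 add.commute card_mono Int_lower1)
  show "B X = insert (lab X) (B X - J)" using l by auto
qed

lemma Q_props:
  assumes X: "X \<in> T" and e: "B X \<inter> J = {}"
  shows "X = B X \<union> (X \<inter> J)" "card (X \<inter> J) = 2" "B X = B X - J"
proof -
  have "X \<notin> T4 F B d J" using e unfolding T4_def by auto
  then have X5: "X \<in> T5 F B J" using X unfolding T_def by auto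
  then have c2: "card (X \<inter> J) = 2" and sub: "X - J \<subseteq> B X" unfolding T5_def by auto
  show "card (X \<inter> J) = 2" by fact
  show "X = B X \<union> (X \<inter> J)" using sub T_props(5)[OF X] by auto
  show "B X = B X - J" using e by auto
qed


definition "U S = \<Union> ((\<lambda>X. X \<inter> J) ` Q S)"

lemma finF: "finite F"
proof -
  have "F \<subseteq> Pow {1..n}" using Fsub by auto
  then show ?thesis by (simp add: finite_subset)
qed

lemma finT: "finite T"
  by (rule finite_subset[OF _ finF]) (auto simp: T_def T4_def T5_def)

lemma finA: "finite (A S)" "finite (P S)" "finite (Q S)"
  using finT unfolding A_def P_def Q_def by auto

lemma A_split: "A S = P S \<union> Q S" "P S \<inter> Q S = {}"
  unfolding P_def Q_def by auto

lemma U_sub: "U S \<subseteq> J" unfolding U_def by auto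

lemma finU: "finite (U S)" using U_sub finJ finite_subset by blast

lemma P_elem:
  assumes "X \<in> P S"
  shows "X \<in> T" "B X = insert (lab X) S" "card (B X) = d" "lab X \<in> J" "B X \<inter> J \<noteq> {}"
proof -
  have X: "X \<in> T" "B X - J = S" "B X \<inter> J \<noteq> {}" using assms unfolding P_def A_def by auto
  show "X \<in> T" "B X \<inter> J \<noteq> {}" using X by auto
  show "B X = insert (lab X) S" using P_label(4)[OF X(1,3)] X(2) by simp
  show "card (B X) = d" "lab X \<in> J" using P_label[OF X(1,3)] by auto
qed

lemma Q_elem:
  assumes "X \<in> Q S"
  shows "X \<in> T" "B X = S" "X = S \<union> (X \<inter> J)" "card (X \<inter> J) = 2"
proof -
  have X: "X \<in> T" "B X - J = S" "B X \<inter> J = {}" using assms unfolding Q_def A_def by auto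
  show "X \<in> T" using X by auto
  show BS: "B X = S" using Q_props(3)[OF X(1,3)] X(2) by simp
  show "X = S \<union> (X \<inter> J)" using Q_props(1)[OF X(1,3)] BS by simp
  show "card (X \<inter> J) = 2" using Q_props(2)[OF X(1,3)] .
qed

lemma P_card:
  assumes SV: "S \<subseteq> V"
  shows "card (P S) \<le> card J - card (U S)"
proof -
  have inj: "inj_on lab (P S)"
  proof (rule inj_onI)
    fix X Y assume X: "X \<in> P S" and Y: "Y \<in> P S" and l: "lab X = lab Y"
    have "B X = B Y" using P_elem(2)[OF X] P_elem(2)[OF Y] l by simp
    then have "B X \<subseteq> Y" using T_props(5)[OF P_elem(1)[OF Y]] by simp
    then show "X = Y" using L2 T_props(1) P_elem(1) P_elem(3) X Y by metis
  qed
  have img: "lab ` P S \<subseteq> J - U S"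
  proof
    fix x assume "x \<in> lab ` P S"
    then obtain X where X: "X \<in> P S" "x = lab X" by auto
    have "x \<notin> U S"
    proof
      assume "x \<in> U S"
      then obtain Y where Y: "Y \<in> Q S" "x \<in> Y" unfolding U_def by auto
      have "B X \<subseteq> Y" using P_elem(2)[OF X(1)] Q_elem(2)[OF Y(1)] T_props(5)[OF Q_elem(1)[OF Y(1)]] Y(2) X(2)
        by auto
      then have "X = Y" using L2 T_props(1) P_elem(1,3) Q_elem(1) X(1) Y(1) by metis
      then show False using X(1) Y(1) unfolding P_def Q_def by auto
    qed
    then show "x \<in> J - U S" using P_elem(4)[OF X(1)] X(2) by auto
  qed
  have "card (P S) = card (lab ` P S)" using inj by (simp add: card_image)
  also have "\<dots> \<le> card (J - U S)" using img finJ by (simp add: card_mono)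
  also have "\<dots> = card J - card (U S)" using U_sub finU by (simp add: card_Diff_subset)
  finally show ?thesis .
qed

lemma Q_img:
  assumes SV: "S \<subseteq> V"
  shows "card (Q S) = card ((\<lambda>X. X \<inter> J) ` Q S)"
    "(\<lambda>X. X \<inter> J) ` Q S \<subseteq> {e. e \<subseteq> U S \<and> card e = 2}"
    "\<forall>e\<in>(\<lambda>X. X \<inter> J) ` Q S. \<forall>f\<in>(\<lambda>X. X \<inter> J) ` Q S. e \<inter> f \<noteq> {}"
proof -
  have "inj_on (\<lambda>X. X \<inter> J) (Q S)"
  proof (rule inj_onI)
    fix X Y assume "X \<in> Q S" "Y \<in> Q S" "X \<inter> J = Y \<inter> J"
    then show "X = Y" using Q_elem(3) by metis
  qed
  then show "card (Q S) = card ((\<lambda>X. X \<inter> J) ` Q S)" by (simp add: card_image)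
  show "(\<lambda>X. X \<inter> J) ` Q S \<subseteq> {e. e \<subseteq> U S \<and> card e = 2}"
    using Q_elem(4) unfolding U_def by auto
  have SJ: "S \<inter> J = {}" using SV unfolding V_def by auto
  show "\<forall>e\<in>(\<lambda>X. X \<inter> J) ` Q S. \<forall>f\<in>(\<lambda>X. X \<inter> J) ` Q S. e \<inter> f \<noteq> {}"
  proof (intro ballI)
    fix e f assume "e \<in> (\<lambda>X. X \<inter> J) ` Q S" "f \<in> (\<lambda>X. X \<inter> J) ` Q S"
    then obtain X Y where X: "X \<in> Q S" "e = X \<inter> J" and Y: "Y \<in> Q S" "f = Y \<inter> J" by auto
    have ne: "Y \<inter> X \<noteq> S" using B_notrace[OF T_props(1)[OF Q_elem(1)[OF X(1)]] T_props(1)[OF Q_elem(1)[OF Y(1)]]]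
      Q_elem(2)[OF X(1)] by simp
    show "e \<inter> f \<noteq> {}"
    proof
      assume "e \<inter> f = {}"
      have hx: "X = S \<union> e" using Q_elem(3)[OF X(1)] X(2) by simp
      have hy: "Y = S \<union> f" using Q_elem(3)[OF Y(1)] Y(2) by simp
      have "(S \<union> f) \<inter> (S \<union> e) = S" using \<open>e \<inter> f = {}\<close> by auto
      then have "Y \<inter> X = S" using hx hy by simp
      then show False using ne by simp
    qed
  qed
qed

lemma Q_card: "S \<subseteq> V \<Longrightarrow> card (Q S) \<le> card (U S)"
proof -
  assume SV: "S \<subseteq> V"
  show ?thesis using Q_img(1)[OF SV] pairs_bound[OF finU Q_img(2)[OF SV] Q_img(3)[OF SV]] by simp
qed

lemma A_card_eq: "card (A S) = card (P S) + card (Q S)"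
  using A_split finA by (simp add: card_Un_disjoint)

lemma cnt_le: "S \<subseteq> V \<Longrightarrow> card (A S) \<le> card J"
proof -
  assume SV: "S \<subseteq> V"
  have "card (U S) \<le> card J" using U_sub finJ by (simp add: card_mono)
  then show ?thesis using A_card_eq[of S] P_card[OF SV] Q_card[OF SV] by linarith
qed

lemma E_edge:
  assumes "z \<in> E S"
  shows "\<exists>x\<in>J. insert x (insert z S) \<in> F"
proof -
  from assms have "insert z S \<in> edges_G F J" unfolding E_def by auto
  then obtain X where X: "insert z S = X - J" "X \<in> F" "card (X \<inter> J) = 1" unfolding edges_G_def by auto
  then obtain x where "X \<inter> J = {x}" using card_1_singletonE by blast
  then have "X = insert x (insert z S)" "x \<in> J" using X(1) by auto
  then show ?thesis using X(2) by auto
qed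


lemma lab_inj: "inj_on lab (P S)"
proof (rule inj_onI)
  fix X Y assume X: "X \<in> P S" and Y: "Y \<in> P S" and l: "lab X = lab Y"
  have "B X = B Y" using P_elem(2)[OF X] P_elem(2)[OF Y] l by simp
  then have "B X \<subseteq> Y" using T_props(5)[OF P_elem(1)[OF Y]] by simp
  then show "X = Y" using L2 T_props(1) P_elem(1) P_elem(3) X Y by metis
qed

lemma cnt_lt:
  assumes SV: "S \<subseteq> V" and big: "card (E S) > card J"
  shows "card (A S) < card J"
proof -
  have SJ: "S \<inter> J = {}" using SV unfolding V_def by auto
  have UJ: "card (U S) \<le> card J" using U_sub finJ by (simp add: card_mono)
  from big have "E S \<noteq> {}" by auto
  then obtain z0 where z0: "z0 \<in> E S" by auto
  have z0n: "z0 \<notin> J" "z0 \<notin> S" using z0 unfolding E_def V_def by auto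
  obtain x0 where x0: "x0 \<in> J" "insert x0 (insert z0 S) \<in> F" using E_edge[OF z0] by auto
  show ?thesis
  proof (cases "Q S = {}")
    case False
    have allx: "\<forall>e\<in>(\<lambda>X. X \<inter> J) ` Q S. x0 \<in> e"
    proof
      fix e assume "e \<in> (\<lambda>X. X \<inter> J) ` Q S"
      then obtain Y where Y: "Y \<in> Q S" "e = Y \<inter> J" by auto
      have YF: "Y \<in> F" using T_props(1)[OF Q_elem(1)[OF Y(1)]] .
      have ne: "insert x0 (insert z0 S) \<inter> Y \<noteq> S" using B_notrace[OF YF x0(2)] Q_elem(2)[OF Y(1)] by simp
      have hy: "Y = S \<union> (Y \<inter> J)" using Q_elem(3)[OF Y(1)] by simp
      have "x0 \<in> Y"
      proof (rule ccontr)
        assume "x0 \<notin> Y"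
        then have "insert x0 (insert z0 S) \<inter> (S \<union> (Y \<inter> J)) = S" using z0n by auto
        then show False using ne hy by simp
      qed
      then show "x0 \<in> e" using Y(2) x0(1) by auto
    qed
    obtain Y0 where Y0: "Y0 \<in> Q S" using False by auto
    have "x0 \<in> Y0 \<inter> J" using allx Y0 by auto
    then have x0U: "x0 \<in> U S" using Y0 unfolding U_def by auto
    have "card ((\<lambda>X. X \<inter> J) ` Q S) \<le> card (U S) - 1"
      by (rule star_bound[OF finU Q_img(2)[OF SV] x0U allx])
    then have "card (Q S) \<le> card (U S) - 1" using Q_img(1)[OF SV] by simp
    moreover have "card (U S) \<ge> 1" using x0U finU by (metis One_nat_def Suc_leI card_gt_0_iff empty_iff)
    ultimately show ?thesis using A_card_eq[of S] P_card[OF SV] UJ by linarith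
  next
    case True
    then have AP: "card (A S) = card (P S)" using A_card_eq[of S] by simp
    show ?thesis
    proof (rule ccontr)
      assume "\<not> card (A S) < card J"
      then have ge: "card (P S) \<ge> card J" using AP by simp
      have imgJ: "lab ` P S \<subseteq> J" using P_elem(4) by auto
      have "card (lab ` P S) = card (P S)" using lab_inj by (simp add: card_image)
      then have labJ: "lab ` P S = J" using card_seteq[OF finJ imgJ] ge by simp
      define f where "f z = (SOME x. x \<in> J \<and> insert x (insert z S) \<in> F)" for z
      have fz: "f z \<in> J \<and> insert (f z) (insert z S) \<in> F" if "z \<in> E S" for z
        unfolding f_def using E_edge[OF that] by (metis (mono_tags, lifting) someI_ex)
      have key: "\<exists>X\<in>P S. lab X = f z \<and> X = insert (f z) (insert z S)" if "z \<in> E S" for z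
      proof -
        have "f z \<in> lab ` P S" using fz[OF that] labJ by auto
        then obtain X where X: "X \<in> P S" "lab X = f z" by auto
        have "B X \<subseteq> insert (f z) (insert z S)" using P_elem(2)[OF X(1)] X(2) by auto
        then have "X = insert (f z) (insert z S)"
          using L2[OF T_props(1)[OF P_elem(1)[OF X(1)]] conjunct2[OF fz[OF that]] P_elem(3)[OF X(1)]] by simp
        then show ?thesis using X by auto
      qed
      have "inj_on f (E S)"
      proof (rule inj_onI)
        fix z z' assume z: "z \<in> E S" and z': "z' \<in> E S" and eq: "f z = f z'"
        have zn: "z \<notin> J" "z \<notin> S" using z unfolding E_def V_def by auto
        have "insert (f z) (insert z S) = insert (f z') (insert z' S)"
        proof -
          obtain X where X: "X \<in> P S" "lab X = f z" "X = insert (f z) (insert z S)" using key[OF z] by auto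
          obtain X' where X': "X' \<in> P S" "lab X' = f z'" "X' = insert (f z') (insert z' S)" using key[OF z'] by auto
          have "X = X'" using lab_inj X X' eq by (metis inj_on_def)
          then show ?thesis using X X' by simp
        qed
        then have "z \<in> insert (f z) (insert z' S)" using eq by auto
        then show "z = z'" using zn fz[OF z] by auto
      qed
      moreover have "f ` E S \<subseteq> J" using fz by auto
      ultimately have "card (E S) \<le> card J" using finJ by (metis card_inj_on_le)
      then show False using big by simp
    qed
  qed
qed


definition "Ss = {S. S \<subseteq> V \<and> card S = d - 1}"
definition "exc = {S \<in> Ss. card (E S) \<le> card J}"
definition "Miss S = (V - S) - E S"
definition "M = {D. D \<subseteq> V \<and> card D = d} - edges_G F J"

lemma finV: "finite V" unfolding V_def by auto

lemma card_V: "card V + card J = n"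
proof -
  have "card J \<le> card {1..n}" using card_mono[OF _ Jsub] by simp
  then show ?thesis unfolding V_def using Jsub by (simp add: card_Diff_subset finJ)
qed

lemma finSs: "finite Ss"
proof -
  have "Ss \<subseteq> Pow V" unfolding Ss_def by auto
  then show ?thesis using finV by (simp add: finite_subset)
qed

lemma card_Ss: "card Ss = card V choose (d - 1)"
  unfolding Ss_def using n_subsets[OF finV] by simp

lemma T_UN: "T = \<Union> (A ` Ss)"
proof
  show "T \<subseteq> \<Union> (A ` Ss)"
  proof
    fix X assume X: "X \<in> T"
    have "B X - J \<in> Ss" using T_props[OF X] unfolding Ss_def by auto
    moreover have "X \<in> A (B X - J)" using X unfolding A_def by auto
    ultimately show "X \<in> \<Union> (A ` Ss)" by auto
  qed
  show "\<Union> (A ` Ss) \<subseteq> T" unfolding A_def by auto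
qed

lemma card_T: "card T = (\<Sum>S\<in>Ss. card (A S))"
  unfolding T_UN by (rule card_UN_disjoint) (use finSs finA in \<open>auto simp: A_def\<close>)

lemma sum_bound: "real (card T) \<le> (real (card J) - 1) * real (card Ss) + real (card exc)"
proof -
  have "real (card T) = (\<Sum>S\<in>Ss. real (card (A S)))" using card_T by simp
  also have "\<dots> \<le> (\<Sum>S\<in>Ss. (real (card J) - 1) + (if card (E S) \<le> card J then 1 else 0))"
  proof (rule sum_mono)
    fix S assume S: "S \<in> Ss"
    then have SV: "S \<subseteq> V" unfolding Ss_def by auto
    show "real (card (A S)) \<le> (real (card J) - 1) + (if card (E S) \<le> card J then 1 else 0)"
    proof (cases "card (E S) \<le> card J")
      case True then show ?thesis using cnt_le[OF SV] by simp
    next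
      case False
      then have "card (A S) < card J" using cnt_lt[OF SV] by simp
      then show ?thesis using False by simp
    qed
  qed
  also have "\<dots> = (real (card J) - 1) * real (card Ss) + (\<Sum>S\<in>Ss. (if card (E S) \<le> card J then 1 else 0))"
    by (simp add: sum.distrib)
  also have "(\<Sum>S\<in>Ss. (if card (E S) \<le> card J then 1 else 0)) = (\<Sum>S\<in>exc. (1::real))"
    unfolding exc_def using sum.inter_filter[OF finSs, of "\<lambda>_. (1::real)", symmetric] by simp
  also have "\<dots> = real (card exc)" by simp
  finally show ?thesis .
qed

lemma finM: "finite M"
proof -
  have "M \<subseteq> Pow V" unfolding M_def by auto
  then show ?thesis using finV by (simp add: finite_subset)
qed

lemma edges_sub: "edges_G F J \<subseteq> {D. D \<subseteq> V \<and> card D = d}"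
proof
  fix D assume "D \<in> edges_G F J"
  then obtain X where X: "D = X - J" "X \<in> F" "card (X \<inter> J) = 1" unfolding edges_G_def by auto
  have "card (X - J) = d" using X F_card F_fin by (simp add: card_Diff_subset_Int)
  moreover have "X - J \<subseteq> V" using X Fsub unfolding V_def by auto
  ultimately show "D \<in> {D. D \<subseteq> V \<and> card D = d}" using X by simp
qed

lemma M_card: "real (card M) = real (card V choose d) - real (card (edges_G F J))"
proof -
  have "card M = card {D. D \<subseteq> V \<and> card D = d} - card (edges_G F J)"
    unfolding M_def using edges_sub finV by (simp add: card_Diff_subset finite_subset)
  moreover have "card (edges_G F J) \<le> card {D. D \<subseteq> V \<and> card D = d}"
    using edges_sub finV by (simp add: card_mono)
  ultimately show ?thesis using n_subsets[OF finV] by simp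
qed

lemma double: "(\<Sum>S\<in>exc. card (Miss S)) \<le> d * card M"
proof -
  have finMiss: "finite (Miss S)" for S unfolding Miss_def using finV by auto
  have finD: "\<forall>D\<in>M. finite D" unfolding M_def using finV by (auto intro: finite_subset)
  have "(\<Sum>S\<in>exc. card (Miss S)) \<le> (\<Sum>S\<in>Ss. card (Miss S))"
    by (rule sum_mono2[OF finSs]) (auto simp: exc_def)
  also have "\<dots> = card (SIGMA S:Ss. Miss S)" using finSs finMiss by simp
  also have "\<dots> \<le> card (SIGMA D:M. D)"
  proof (rule card_inj_on_le)
    show "inj_on (\<lambda>(S, z). (insert z S, z)) (SIGMA S:Ss. Miss S)"
    proof (rule inj_onI, clarsimp)
      fix S z S' assume "S \<in> Ss" "z \<in> Miss S" "S' \<in> Ss" "z \<in> Miss S'" "insert z S = insert z S'"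
      then show "S = S'" unfolding Miss_def by (metis Diff_iff Diff_insert_absorb)
    qed
    show "(\<lambda>(S, z). (insert z S, z)) ` (SIGMA S:Ss. Miss S) \<subseteq> (SIGMA D:M. D)"
    proof clarsimp
      fix S z assume S: "S \<in> Ss" and z: "z \<in> Miss S"
      have "z \<notin> S" "z \<in> V" "insert z S \<notin> edges_G F J" using z unfolding Miss_def E_def by auto
      moreover have "S \<subseteq> V" "card S = d - 1" "finite S" using S finV unfolding Ss_def by (auto intro: finite_subset)
      ultimately show "insert z S \<in> M" unfolding M_def using d1 by auto
    qed
    show "finite (SIGMA D:M. D)" using finM finD by auto
  qed
  also have "\<dots> = (\<Sum>D\<in>M. card D)"
    using finM finD by simp
  also have "\<dots> = d * card M" unfolding M_def by simp
  finally show ?thesis .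
qed

lemma miss_lb:
  assumes S: "S \<in> exc"
  shows "real (card (Miss S)) \<ge> real n - 2 * real (card J) - (real d - 1)"
proof -
  have SV: "S \<subseteq> V" and cS: "card S = d - 1" and cE: "card (E S) \<le> card J"
    using S unfolding exc_def Ss_def by auto
  have ES: "E S \<subseteq> V - S" unfolding E_def by auto
  have finVS: "finite (V - S)" using finV by auto
  have e1: "card (Miss S) + card (E S) = card (V - S)"
    unfolding Miss_def using ES finVS card_Diff_subset[of "E S" "V - S"] card_mono[OF finVS ES]
    by (simp add: finite_subset)
  have e2: "card (V - S) + card S = card V"
    using SV finV card_Diff_subset[of S V] card_mono[OF finV SV] by (simp add: finite_subset)
  have "real (card (Miss S)) + real (card (E S)) = real (card (V - S))" using e1 by (metis of_nat_add)
  moreover have "real (card (V - S)) + real (card S) = real (card V)" using e2 by (metis of_nat_add)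
  moreover have "real (card V) + real (card J) = real n" using card_V by (metis of_nat_add)
  moreover have "real (card S) = real d - 1" using cS d1 by (simp add: of_nat_diff)
  moreover have "real (card (E S)) \<le> real (card J)" using cE by simp
  ultimately show ?thesis by linarith
qed


lemma main_bound:
  assumes J4: "real (card J) \<le> real n / 4" and nbig: "n \<ge> 4 * d" and K0: "K \<ge> 0"
    and hyp: "real (card (edges_G F J)) \<ge> real ((n - card J) choose d) - K * real n"
  shows "real (card T) \<le> (real (card J) - 1) * real ((n - card J) choose (d - 1)) + 4 * real d * K"
proof -
  have cV: "card V = n - card J" using card_V by simp
  define L where "L = real n - 2 * real (card J) - (real d - 1)"
  have "(\<Sum>S\<in>exc. L) \<le> (\<Sum>S\<in>exc. real (card (Miss S)))"
    by (rule sum_mono) (use miss_lb in \<open>auto simp: L_def\<close>)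
  also have "\<dots> = real (\<Sum>S\<in>exc. card (Miss S))" by simp
  also have "\<dots> \<le> real (d * card M)" using double by (simp only: of_nat_le_iff)
  also have "\<dots> = real d * (real (card V choose d) - real (card (edges_G F J)))" using M_card by simp
  also have "\<dots> \<le> real d * (K * real n)"
    by (rule mult_left_mono) (use hyp cV in auto)
  finally have s1: "real (card exc) * L \<le> real d * (K * real n)" by simp
  have dn: "real n \<ge> 4 * real d" using nbig by (metis of_nat_le_iff of_nat_mult of_nat_numeral)
  have Lge: "L \<ge> real n / 4" unfolding L_def using J4 dn by linarith
  have "real (card exc) * (real n / 4) \<le> real (card exc) * L"
    by (rule mult_left_mono[OF Lge]) simp
  then have "real (card exc) * real n \<le> (4 * real d * K) * real n" using s1 by (simp add: algebra_simps)
  moreover have "real n > 0" using nbig d1 by simp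
  ultimately have ce: "real (card exc) \<le> 4 * real d * K" by (metis mult_le_cancel_right_pos)
  have "real (card T) \<le> (real (card J) - 1) * real (card Ss) + real (card exc)" by (rule sum_bound)
  also have "card Ss = (n - card J) choose (d - 1)" using card_Ss cV by simp
  finally show ?thesis using ce by linarith
qed

end

theorem claim3p10:
  fixes d :: nat
  assumes "d \<ge> 2"
  shows "\<exists>C::real. C > 0 \<and> (\<exists>n0::nat. \<forall>n\<ge>n0.
     \<forall>(F::nat set set) (B::nat set \<Rightarrow> nat set) (J::nat set) (K::real).
       (\<forall>X\<in>F. X \<subseteq> {1..n} \<and> card X = d + 1) \<longrightarrow>
       vc_dim_le F d \<longrightarrow>
       max_admissible_choice F B \<longrightarrow>
       J \<subseteq> {1..n} \<longrightarrow> real (card J) \<le> real n / 4 \<longrightarrow>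
       K \<ge> 0 \<longrightarrow>
       real (card (edges_G F J)) \<ge> real ((n - card J) choose d) - K * real n \<longrightarrow>
       real (card (T4 F B d J \<union> T5 F B J))
         \<le> (real (card J) - 1) * real ((n - card J) choose (d - 1)) + C * K)"
proof (intro exI conjI allI impI)
  show "(0::real) < 4 * real d" using assms by simp
  fix n F B J and K :: real
  assume nb: "4 * d \<le> n" and Fs: "\<forall>X\<in>F. X \<subseteq> {1..n} \<and> card X = d + 1"
    and vc: "vc_dim_le F d" and ma: "max_admissible_choice F B" and Js: "J \<subseteq> {1..n}"
    and J4: "real (card J) \<le> real n / 4" and K0: "K \<ge> 0"
    and hyp: "real (card (edges_G F J)) \<ge> real ((n - card J) choose d) - K * real n"
  interpret cfg n d F B J
    using Fs ma Js assms unfolding max_admissible_choice_def by unfold_locales auto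
  show "real (card (T4 F B d J \<union> T5 F B J))
         \<le> (real (card J) - 1) * real ((n - card J) choose (d - 1)) + 4 * real d * K"
    using main_bound[OF J4 nb K0 hyp] unfolding T_def .
qed

end
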